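(* Let $(I,\le)$ be a directed partially ordered set and let $(R_i,\varphi_{ij})_{i\le j}$ be a directed system of rings and ring homomorphisms indexed by $I$ (so $\varphi_{ii}=\mathrm{id}$ and $\varphi_{jk}\circ\varphi_{ij}=\varphi_{ik}$ for $i\le j\le k$). If each $R_i$ satisfies the irreducible intersection property, then $\operatorname{colim}_{i\in I}R_i$ satisfies the irreducible intersection property.
   Context: All rings are commutative with $1$. A ring $R$ satisfies the irreducible intersection property if for any prime ideals $p_1,p_2\subset R$, either $p_1+p_2=R$ or $p_1+p_2$ is a prime ideal. A partially ordered set $I$ is directed if for all $i,j\in I$ there is $k\in I$ with $i,j\le k$. *)

theory Defs
  imports "HOL-Algebra.Algebra"
begin

text \<open>Irreducible intersection property: for any prime ideals p1, p2 of R,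
  either p1 + p2 = R or p1 + p2 is a prime ideal.  (In HOL-Algebra a prime
  ideal is proper by definition.)\<close>
definition irreducible_intersection_property :: "('a, 'm) ring_scheme \<Rightarrow> bool" where
  "irreducible_intersection_property R \<longleftrightarrow>
     (\<forall>p1 p2. primeideal p1 R \<and> primeideal p2 R \<longrightarrow>
        p1 <+>\<^bsub>R\<^esub> p2 = carrier R \<or> primeideal (p1 <+>\<^bsub>R\<^esub> p2) R)"

definition directed_system :: "('i::order \<Rightarrow> 'a ring) \<Rightarrow> ('i \<Rightarrow> 'i \<Rightarrow> 'a \<Rightarrow> 'a) \<Rightarrow> bool" where
  "directed_system R phi \<longleftrightarrow>
     (\<forall>i. cring (R i)) \<and>
     (\<forall>i j. i \<le> j \<longrightarrow> phi i j \<in> ring_hom (R i) (R j)) \<and>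
     (\<forall>i. \<forall>x\<in>carrier (R i). phi i i x = x) \<and>
     (\<forall>i j k. i \<le> j \<and> j \<le> k \<longrightarrow> (\<forall>x\<in>carrier (R i). phi j k (phi i j x) = phi i k x))"

text \<open>The standard construction of the directed colimit: the disjoint union of the carriers
  modulo (i,x) ~ (j,y) iff x and y become equal in some R k with i,j \<le> k.\<close>
definition dlim_rel :: "('i::order \<Rightarrow> 'a ring) \<Rightarrow> ('i \<Rightarrow> 'i \<Rightarrow> 'a \<Rightarrow> 'a) \<Rightarrow> (('i \<times> 'a) \<times> ('i \<times> 'a)) set" where
  "dlim_rel R phi = {((i, x), (j, y)). x \<in> carrier (R i) \<and> y \<in> carrier (R j) \<and>
       (\<exists>k. i \<le> k \<and> j \<le> k \<and> phi i k x = phi j k y)}"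

definition dlim_class :: "('i::order \<Rightarrow> 'a ring) \<Rightarrow> ('i \<Rightarrow> 'i \<Rightarrow> 'a \<Rightarrow> 'a) \<Rightarrow> 'i \<Rightarrow> 'a \<Rightarrow> ('i \<times> 'a) set" where
  "dlim_class R phi i x = dlim_rel R phi `` {(i, x)}"

definition dlim_op :: "('i::order \<Rightarrow> 'a ring) \<Rightarrow> ('i \<Rightarrow> 'i \<Rightarrow> 'a \<Rightarrow> 'a)
    \<Rightarrow> ('i \<Rightarrow> 'a \<Rightarrow> 'a \<Rightarrow> 'a) \<Rightarrow> ('i \<times> 'a) set \<Rightarrow> ('i \<times> 'a) set \<Rightarrow> ('i \<times> 'a) set" where
  "dlim_op R phi f A B =
     (\<Union>p\<in>A. \<Union>q\<in>B. \<Union>k\<in>{k. fst p \<le> k \<and> fst q \<le> k}.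
        dlim_class R phi k (f k (phi (fst p) k (snd p)) (phi (fst q) k (snd q))))"

definition direct_limit :: "('i::order \<Rightarrow> 'a ring) \<Rightarrow> ('i \<Rightarrow> 'i \<Rightarrow> 'a \<Rightarrow> 'a) \<Rightarrow> ('i \<times> 'a) set ring" where
  "direct_limit R phi =
    \<lparr> partial_object.carrier = (Sigma UNIV (\<lambda>i. carrier (R i))) // dlim_rel R phi,
      monoid.mult = dlim_op R phi (\<lambda>k. monoid.mult (R k)),
      monoid.one = (\<Union>i. dlim_class R phi i (monoid.one (R i))),
      ring.zero = (\<Union>i. dlim_class R phi i (ring.zero (R i))),
      ring.add = dlim_op R phi (\<lambda>k. ring.add (R k)) \<rparr>"

end

theory Submission
  imports Defs
begin

locale dsys =
  fixes R :: "'i::order \<Rightarrow> 'a ring" and phi :: "'i \<Rightarrow> 'i \<Rightarrow> 'a \<Rightarrow> 'a"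
  assumes directed: "\<forall>i j::'i. \<exists>k. i \<le> k \<and> j \<le> k"
    and system: "directed_system R phi"
begin

abbreviation "D \<equiv> direct_limit R phi"
abbreviation "cl \<equiv> dlim_class R phi"
abbreviation "SS \<equiv> (SIGMA i:UNIV. carrier (R i))"

lemma cr: "cring (R i)" using system unfolding directed_system_def by simp
lemma rg: "ring (R i)" using cr cring.axioms(1) by blast
lemma hom: "i \<le> j \<Longrightarrow> phi i j \<in> ring_hom (R i) (R j)"
  using system unfolding directed_system_def by blast
lemma pid: "x \<in> carrier (R i) \<Longrightarrow> phi i i x = x"
  using system unfolding directed_system_def by blast
lemma comp: "i \<le> j \<Longrightarrow> j \<le> k \<Longrightarrow> x \<in> carrier (R i) \<Longrightarrow> phi j k (phi i j x) = phi i k x"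
  using system unfolding directed_system_def by blast
lemma dir: fixes i j :: 'i obtains k where "i \<le> k" "j \<le> k" using directed by blast
lemma pcl: "i \<le> j \<Longrightarrow> x \<in> carrier (R i) \<Longrightarrow> phi i j x \<in> carrier (R j)"
  by (rule ring_hom_closed[OF hom])
lemma padd: "i \<le> j \<Longrightarrow> x \<in> carrier (R i) \<Longrightarrow> y \<in> carrier (R i) \<Longrightarrow>
   phi i j (x \<oplus>\<^bsub>R i\<^esub> y) = phi i j x \<oplus>\<^bsub>R j\<^esub> phi i j y"
  by (rule ring_hom_add[OF hom])
lemma pmult: "i \<le> j \<Longrightarrow> x \<in> carrier (R i) \<Longrightarrow> y \<in> carrier (R i) \<Longrightarrow>
   phi i j (x \<otimes>\<^bsub>R i\<^esub> y) = phi i j x \<otimes>\<^bsub>R j\<^esub> phi i j y"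
  by (rule ring_hom_mult[OF hom])
lemma pone: "i \<le> j \<Longrightarrow> phi i j \<one>\<^bsub>R i\<^esub> = \<one>\<^bsub>R j\<^esub>"
  by (rule ring_hom_one[OF hom])
lemma pzero: "i \<le> j \<Longrightarrow> phi i j \<zero>\<^bsub>R i\<^esub> = \<zero>\<^bsub>R j\<^esub>"
  by (rule ring_hom_zero[OF hom rg rg])

lemma rel_iff: "((i,x),(j,y)) \<in> dlim_rel R phi \<longleftrightarrow>
   x \<in> carrier (R i) \<and> y \<in> carrier (R j) \<and> (\<exists>k. i \<le> k \<and> j \<le> k \<and> phi i k x = phi j k y)"
  by (simp add: dlim_rel_def)

lemma equiv_rel: "equiv SS (dlim_rel R phi)"
proof (rule equivI)
  show "dlim_rel R phi \<subseteq> SS \<times> SS" by (auto simp: dlim_rel_def)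
  show "refl_on SS (dlim_rel R phi)" unfolding refl_on_def by (auto simp: dlim_rel_def)
  show "sym (dlim_rel R phi)" unfolding sym_def by (auto simp: dlim_rel_def)
  show "trans (dlim_rel R phi)" unfolding trans_def
  proof (clarify)
    fix i x j y l z
    assume a: "((i,x),(j,y)) \<in> dlim_rel R phi" and b: "((j,y),(l,z)) \<in> dlim_rel R phi"
    from a obtain k where k: "i \<le> k" "j \<le> k" "phi i k x = phi j k y" and c: "x \<in> carrier (R i)" "y \<in> carrier (R j)"
      by (auto simp: rel_iff)
    from b obtain k' where k': "j \<le> k'" "l \<le> k'" "phi j k' y = phi l k' z" and d: "z \<in> carrier (R l)"
      by (auto simp: rel_iff)
    obtain n where n: "k \<le> n" "k' \<le> n" using dir by blast
    have "phi i n x = phi k n (phi i k x)" using comp[OF k(1) n(1) c(1)] by simp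
    also have "\<dots> = phi j n y" using comp[OF k(2) n(1) c(2)] k(3) by simp
    also have "\<dots> = phi k' n (phi j k' y)" using comp[OF k'(1) n(2) c(2)] by simp
    also have "\<dots> = phi l n z" using comp[OF k'(2) n(2) d] k'(3) by simp
    finally show "((i,x),(l,z)) \<in> dlim_rel R phi" using c d k k' n order_trans
      by (auto simp: rel_iff)
  qed
qed

lemma cl_eq: "x \<in> carrier (R i) \<Longrightarrow> y \<in> carrier (R j) \<Longrightarrow>
   cl i x = cl j y \<longleftrightarrow> (\<exists>k. i \<le> k \<and> j \<le> k \<and> phi i k x = phi j k y)"
  unfolding dlim_class_def
  using eq_equiv_class_iff[OF equiv_rel, of "(i,x)" "(j,y)"] by (simp add: rel_iff)

lemma cl_lift: "i \<le> k \<Longrightarrow> x \<in> carrier (R i) \<Longrightarrow> cl i x = cl k (phi i k x)"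
  by (subst cl_eq) (auto intro!: exI[of _ k] simp: pcl pid)

lemma carrierD: "carrier D = {cl i x | i x. x \<in> carrier (R i)}"
  by (auto simp: direct_limit_def quotient_def dlim_class_def)

lemma cl_in: "x \<in> carrier (R i) \<Longrightarrow> cl i x \<in> carrier D"
  by (auto simp: carrierD)

lemma carrierE: assumes "a \<in> carrier D"
  obtains i x where "x \<in> carrier (R i)" "a = cl i x"
  using assms by (auto simp: carrierD)

lemma carrierE2: assumes "a \<in> carrier D" "b \<in> carrier D"
  obtains k x y where "x \<in> carrier (R k)" "y \<in> carrier (R k)" "a = cl k x" "b = cl k y"
proof -
  obtain i x where x: "x \<in> carrier (R i)" "a = cl i x" using assms carrierE by blast
  obtain j y where y: "y \<in> carrier (R j)" "b = cl j y" using assms carrierE by blast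
  obtain k where k: "i \<le> k" "j \<le> k" using dir by blast
  show ?thesis using that[of "phi i k x" k "phi j k y"] x y k cl_lift pcl by simp
qed

lemma carrierE3: assumes "a \<in> carrier D" "b \<in> carrier D" "c \<in> carrier D"
  obtains k x y z where "x \<in> carrier (R k)" "y \<in> carrier (R k)" "z \<in> carrier (R k)"
    "a = cl k x" "b = cl k y" "c = cl k z"
proof -
  obtain i x y where x: "x \<in> carrier (R i)" "y \<in> carrier (R i)" "a = cl i x" "b = cl i y"
    using assms carrierE2 by blast
  obtain j z where z: "z \<in> carrier (R j)" "c = cl j z" using assms carrierE by blast
  obtain k where k: "i \<le> k" "j \<le> k" using dir by blast
  show ?thesis using that[of "phi i k x" k "phi i k y" "phi j k z"] x z k cl_lift pcl by simp
qed

lemma op_cl: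
  assumes fcl: "\<And>k a b. a \<in> carrier (R k) \<Longrightarrow> b \<in> carrier (R k) \<Longrightarrow> f k a b \<in> carrier (R k)"
    and pres: "\<And>k m a b. k \<le> m \<Longrightarrow> a \<in> carrier (R k) \<Longrightarrow> b \<in> carrier (R k) \<Longrightarrow>
       phi k m (f k a b) = f m (phi k m a) (phi k m b)"
    and x: "x \<in> carrier (R i)" and y: "y \<in> carrier (R i)"
  shows "dlim_op R phi f (cl i x) (cl i y) = cl i (f i x y)"
proof -
  have each: "cl k (f k (phi j k a) (phi j' k b)) = cl i (f i x y)"
    if p: "(j,a) \<in> cl i x" and q: "(j',b) \<in> cl i y" and k: "j \<le> k" "j' \<le> k" for j a j' b k
  proof -
    from p obtain m where m: "i \<le> m" "j \<le> m" "phi i m x = phi j m a" and a: "a \<in> carrier (R j)"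
      by (auto simp: dlim_class_def rel_iff)
    from q obtain m' where m': "i \<le> m'" "j' \<le> m'" "phi i m' y = phi j' m' b" and b: "b \<in> carrier (R j')"
      by (auto simp: dlim_class_def rel_iff)
    obtain n0 where n0: "m \<le> n0" "m' \<le> n0" using dir by blast
    obtain n where n: "k \<le> n" "n0 \<le> n" using dir by blast
    have mn: "m \<le> n" "m' \<le> n" using n0 n by auto
    have e1: "phi j n a = phi i n x"
      using comp[OF m(2) mn(1) a] comp[OF m(1) mn(1) x] m(3) by simp
    have e2: "phi j' n b = phi i n y"
      using comp[OF m'(2) mn(2) b] comp[OF m'(1) mn(2) y] m'(3) by simp
    have Fc: "f k (phi j k a) (phi j' k b) \<in> carrier (R k)"
      using fcl pcl[OF k(1) a] pcl[OF k(2) b] by blast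
    have "phi k n (f k (phi j k a) (phi j' k b)) = f n (phi k n (phi j k a)) (phi k n (phi j' k b))"
      using pres[OF n(1)] pcl[OF k(1) a] pcl[OF k(2) b] by blast
    also have "\<dots> = f n (phi j n a) (phi j' n b)"
      using comp[OF k(1) n(1) a] comp[OF k(2) n(1) b] by simp
    also have "\<dots> = phi i n (f i x y)"
    proof -
      have "i \<le> n" using m(1) mn(1) by (rule order_trans)
      then show ?thesis using e1 e2 pres[of i n x y] x y by simp
    qed
    finally have eq: "phi k n (f k (phi j k a) (phi j' k b)) = phi i n (f i x y)" .
    have "i \<le> n" using m(1) mn(1) by (rule order_trans)
    then show ?thesis using cl_eq[OF Fc fcl[OF x y]] n(1) eq by blast
  qed
  have xi: "(i,x) \<in> cl i x" "(i,y) \<in> cl i y"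
    using equiv_class_self[OF equiv_rel] x y by (auto simp: dlim_class_def)
  show ?thesis unfolding dlim_op_def
  proof (rule equalityI)
    show "(\<Union>p\<in>cl i x. \<Union>q\<in>cl i y. \<Union>k\<in>{k. fst p \<le> k \<and> fst q \<le> k}.
        cl k (f k (phi (fst p) k (snd p)) (phi (fst q) k (snd q)))) \<subseteq> cl i (f i x y)"
    proof (intro UN_least)
      fix p q k assume p: "p \<in> cl i x" and q: "q \<in> cl i y" and k: "k \<in> {k. fst p \<le> k \<and> fst q \<le> k}"
      have p': "(fst p, snd p) \<in> cl i x" and q': "(fst q, snd q) \<in> cl i y" using p q by simp_all
      show "cl k (f k (phi (fst p) k (snd p)) (phi (fst q) k (snd q))) \<subseteq> cl i (f i x y)"
        using each[OF p' q'] k by simp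
    qed
    have "cl i (f i x y) = cl i (f i (phi (fst (i,x)) i (snd (i,x))) (phi (fst (i,y)) i (snd (i,y))))"
      using pid x y by simp
    also have "\<dots> \<subseteq> (\<Union>p\<in>cl i x. \<Union>q\<in>cl i y. \<Union>k\<in>{k. fst p \<le> k \<and> fst q \<le> k}.
        cl k (f k (phi (fst p) k (snd p)) (phi (fst q) k (snd q))))"
      apply (rule subset_trans[OF _ UN_upper[OF xi(1)]])
      apply (rule subset_trans[OF _ UN_upper[OF xi(2)]])
      apply (rule UN_upper)
      by simp
    finally show "cl i (f i x y) \<subseteq> (\<Union>p\<in>cl i x. \<Union>q\<in>cl i y. \<Union>k\<in>{k. fst p \<le> k \<and> fst q \<le> k}.
        cl k (f k (phi (fst p) k (snd p)) (phi (fst q) k (snd q))))" .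
  qed
qed

lemma D_add: "add D = dlim_op R phi (\<lambda>k. add (R k))" by (simp add: direct_limit_def)
lemma D_mult: "monoid.mult D = dlim_op R phi (\<lambda>k. monoid.mult (R k))" by (simp add: direct_limit_def)

lemma add_cl: "x \<in> carrier (R i) \<Longrightarrow> y \<in> carrier (R i) \<Longrightarrow> cl i x \<oplus>\<^bsub>D\<^esub> cl i y = cl i (x \<oplus>\<^bsub>R i\<^esub> y)"
  unfolding D_add
  by (rule op_cl[where f="\<lambda>k. add (R k)", simplified])
     (auto simp: padd intro: ring.ring_simprules[OF rg])

lemma mult_cl: "x \<in> carrier (R i) \<Longrightarrow> y \<in> carrier (R i) \<Longrightarrow> cl i x \<otimes>\<^bsub>D\<^esub> cl i y = cl i (x \<otimes>\<^bsub>R i\<^esub> y)"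
  unfolding D_mult
  by (rule op_cl[where f="\<lambda>k. monoid.mult (R k)", simplified])
     (auto simp: pmult intro: ring.ring_simprules[OF rg])

lemma one_cl: "\<one>\<^bsub>D\<^esub> = cl i \<one>\<^bsub>R i\<^esub>"
proof -
  define Z where "Z j = \<one>\<^bsub>R j\<^esub>" for j
  have "cl j (Z j) = cl i (Z i)" for j
  proof -
    obtain k where k: "i \<le> k" "j \<le> k" using dir by blast
    show ?thesis using cl_lift[OF k(1), of "\<one>\<^bsub>R i\<^esub>"] cl_lift[OF k(2), of "\<one>\<^bsub>R j\<^esub>"] pone[OF k(1)] pone[OF k(2)]
      ring.ring_simprules(6)[OF rg] by (simp add: Z_def)
  qed
  then have e: "(\<Union>j. cl j (Z j)) = cl i (Z i)" by blast
  then show ?thesis by (simp add: direct_limit_def Z_def)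
qed

lemma zero_cl: "\<zero>\<^bsub>D\<^esub> = cl i \<zero>\<^bsub>R i\<^esub>"
proof -
  define Z where "Z j = \<zero>\<^bsub>R j\<^esub>" for j
  have "cl j (Z j) = cl i (Z i)" for j
  proof -
    obtain k where k: "i \<le> k" "j \<le> k" using dir by blast
    show ?thesis using cl_lift[OF k(1), of "\<zero>\<^bsub>R i\<^esub>"] cl_lift[OF k(2), of "\<zero>\<^bsub>R j\<^esub>"] pzero[OF k(1)] pzero[OF k(2)]
      ring.ring_simprules(2)[OF rg] by (simp add: Z_def)
  qed
  then have e: "(\<Union>j. cl j (Z j)) = cl i (Z i)" by blast
  then show ?thesis by (simp add: direct_limit_def Z_def)
qed

lemma D_cring: "cring D"
proof (rule cringI)
  show "abelian_group D"
  proof (rule abelian_groupI)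
    fix x y assume "x \<in> carrier D" "y \<in> carrier D"
    then obtain k a b where ab: "a \<in> carrier (R k)" "b \<in> carrier (R k)" "x = cl k a" "y = cl k b"
      by (rule carrierE2)
    interpret Rk: cring "R k" by (rule cr)
    show "x \<oplus>\<^bsub>D\<^esub> y \<in> carrier D" using ab by (simp add: add_cl cl_in)
    show "x \<oplus>\<^bsub>D\<^esub> y = y \<oplus>\<^bsub>D\<^esub> x" using ab by (simp add: add_cl Rk.a_comm)
  next
    show "\<zero>\<^bsub>D\<^esub> \<in> carrier D" using zero_cl[of undefined] cl_in[OF ring.ring_simprules(2)[OF rg, of undefined]] by simp
  next
    fix x y z assume "x \<in> carrier D" "y \<in> carrier D" "z \<in> carrier D"
    then obtain k a b c where ab: "a \<in> carrier (R k)" "b \<in> carrier (R k)" "c \<in> carrier (R k)"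
       "x = cl k a" "y = cl k b" "z = cl k c"
      by (rule carrierE3)
    interpret Rk: cring "R k" by (rule cr)
    show "x \<oplus>\<^bsub>D\<^esub> y \<oplus>\<^bsub>D\<^esub> z = x \<oplus>\<^bsub>D\<^esub> (y \<oplus>\<^bsub>D\<^esub> z)"
      using ab by (simp add: add_cl Rk.a_assoc)
  next
    fix x assume "x \<in> carrier D"
    then obtain k a where ab: "a \<in> carrier (R k)" "x = cl k a" by (rule carrierE)
    interpret Rk: cring "R k" by (rule cr)
    show "\<zero>\<^bsub>D\<^esub> \<oplus>\<^bsub>D\<^esub> x = x" using ab by (simp add: add_cl zero_cl[of k])
    show "\<exists>y\<in>carrier D. y \<oplus>\<^bsub>D\<^esub> x = \<zero>\<^bsub>D\<^esub>"
      using ab by (intro bexI[of _ "cl k (\<ominus>\<^bsub>R k\<^esub> a)"]) (simp_all add: add_cl zero_cl[of k] cl_in Rk.l_neg)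
  qed
next
  show "comm_monoid D"
  proof (rule comm_monoidI)
    fix x y assume "x \<in> carrier D" "y \<in> carrier D"
    then obtain k a b where ab: "a \<in> carrier (R k)" "b \<in> carrier (R k)" "x = cl k a" "y = cl k b"
      by (rule carrierE2)
    interpret Rk: cring "R k" by (rule cr)
    show "x \<otimes>\<^bsub>D\<^esub> y \<in> carrier D" using ab by (simp add: mult_cl cl_in)
    show "x \<otimes>\<^bsub>D\<^esub> y = y \<otimes>\<^bsub>D\<^esub> x" using ab by (simp add: mult_cl Rk.m_comm)
  next
    show "\<one>\<^bsub>D\<^esub> \<in> carrier D" using one_cl[of undefined] cl_in[OF ring.ring_simprules(6)[OF rg, of undefined]] by simp
  next
    fix x y z assume "x \<in> carrier D" "y \<in> carrier D" "z \<in> carrier D"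
    then obtain k a b c where ab: "a \<in> carrier (R k)" "b \<in> carrier (R k)" "c \<in> carrier (R k)"
       "x = cl k a" "y = cl k b" "z = cl k c"
      by (rule carrierE3)
    interpret Rk: cring "R k" by (rule cr)
    show "x \<otimes>\<^bsub>D\<^esub> y \<otimes>\<^bsub>D\<^esub> z = x \<otimes>\<^bsub>D\<^esub> (y \<otimes>\<^bsub>D\<^esub> z)"
      using ab by (simp add: mult_cl Rk.m_assoc)
  next
    fix x assume "x \<in> carrier D"
    then obtain k a where ab: "a \<in> carrier (R k)" "x = cl k a" by (rule carrierE)
    interpret Rk: cring "R k" by (rule cr)
    show "\<one>\<^bsub>D\<^esub> \<otimes>\<^bsub>D\<^esub> x = x" using ab by (simp add: mult_cl one_cl[of k])
  qed
next
  fix x y z assume "x \<in> carrier D" "y \<in> carrier D" "z \<in> carrier D"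
  then obtain k a b c where ab: "a \<in> carrier (R k)" "b \<in> carrier (R k)" "c \<in> carrier (R k)"
     "x = cl k a" "y = cl k b" "z = cl k c"
    by (rule carrierE3)
  interpret Rk: cring "R k" by (rule cr)
  show "(x \<oplus>\<^bsub>D\<^esub> y) \<otimes>\<^bsub>D\<^esub> z = x \<otimes>\<^bsub>D\<^esub> z \<oplus>\<^bsub>D\<^esub> y \<otimes>\<^bsub>D\<^esub> z"
    using ab by (simp add: mult_cl add_cl Rk.l_distr)
qed

lemma D_ring: "ring D" using D_cring cring.axioms(1) by blast

lemma homk: "ring_hom_ring (R k) D (cl k)"
  by (rule ring_hom_ringI[OF rg D_ring]) (auto simp: cl_in mult_cl add_cl one_cl[of k])

definition pre :: "('i \<times> 'a) set set \<Rightarrow> 'i \<Rightarrow> 'a set" where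
  "pre P k = {a \<in> carrier (R k). cl k a \<in> P}"

lemma pre_prime: "primeideal P D \<Longrightarrow> primeideal (pre P k) (R k)"
  unfolding pre_def by (rule ring_hom_ring.primeideal_vimage[OF homk cr])

lemma sum_char:
  assumes P: "ideal P D" and Q: "ideal Q D" and a: "a \<in> carrier (R k)"
  shows "cl k a \<in> P <+>\<^bsub>D\<^esub> Q \<longleftrightarrow> (\<exists>m. k \<le> m \<and> phi k m a \<in> pre P m <+>\<^bsub>R m\<^esub> pre Q m)"
proof
  assume "cl k a \<in> P <+>\<^bsub>D\<^esub> Q"
  then obtain x y where xy: "x \<in> P" "y \<in> Q" "cl k a = x \<oplus>\<^bsub>D\<^esub> y"
    unfolding set_add_def' by blast
  have xc: "x \<in> carrier D" "y \<in> carrier D"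
    using ideal.Icarr[OF P xy(1)] ideal.Icarr[OF Q xy(2)] by auto
  then obtain l p q where pq: "p \<in> carrier (R l)" "q \<in> carrier (R l)" "x = cl l p" "y = cl l q"
    by (rule carrierE2)
  interpret Rl: cring "R l" by (rule cr)
  have pqc: "p \<oplus>\<^bsub>R l\<^esub> q \<in> carrier (R l)" using pq(1,2) by (rule Rl.add.m_closed)
  have "cl k a = cl l (p \<oplus>\<^bsub>R l\<^esub> q)" using xy(3) pq add_cl[OF pq(1,2)] by simp
  then obtain n where n: "k \<le> n" "l \<le> n" "phi k n a = phi l n (p \<oplus>\<^bsub>R l\<^esub> q)"
    using cl_eq[OF a pqc] by blast
  have e: "phi k n a = phi l n p \<oplus>\<^bsub>R n\<^esub> phi l n q" using n(3) padd[OF n(2) pq(1,2)] by simp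
  have "cl n (phi l n p) \<in> P" using cl_lift[OF n(2) pq(1)] pq(3) xy(1) by simp
  then have "phi l n p \<in> pre P n" using pcl[OF n(2) pq(1)] unfolding pre_def by blast
  moreover have "cl n (phi l n q) \<in> Q" using cl_lift[OF n(2) pq(2)] pq(4) xy(2) by simp
  then have "phi l n q \<in> pre Q n" using pcl[OF n(2) pq(2)] unfolding pre_def by blast
  ultimately have "phi k n a \<in> pre P n <+>\<^bsub>R n\<^esub> pre Q n" unfolding e set_add_def' by blast
  then show "\<exists>m. k \<le> m \<and> phi k m a \<in> pre P m <+>\<^bsub>R m\<^esub> pre Q m" using n(1) by blast
next
  assume "\<exists>m. k \<le> m \<and> phi k m a \<in> pre P m <+>\<^bsub>R m\<^esub> pre Q m"
  then obtain m p q where m: "k \<le> m" "p \<in> pre P m" "q \<in> pre Q m" "phi k m a = p \<oplus>\<^bsub>R m\<^esub> q"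
    unfolding set_add_def' by blast
  have pc: "p \<in> carrier (R m)" "cl m p \<in> P" using m(2) unfolding pre_def by auto
  have qc: "q \<in> carrier (R m)" "cl m q \<in> Q" using m(3) unfolding pre_def by auto
  have "cl k a = cl m (p \<oplus>\<^bsub>R m\<^esub> q)" using cl_lift[OF m(1) a] m(4) by simp
  also have "\<dots> = cl m p \<oplus>\<^bsub>D\<^esub> cl m q" using add_cl[OF pc(1) qc(1)] by simp
  finally show "cl k a \<in> P <+>\<^bsub>D\<^esub> Q" using pc(2) qc(2) unfolding set_add_def' by blast
qed

lemma iip_D:
  assumes iip: "\<forall>i. irreducible_intersection_property (R i)"
  shows "irreducible_intersection_property D"
  unfolding irreducible_intersection_property_def
proof (intro allI impI)
  fix P Q assume PQ: "primeideal P D \<and> primeideal Q D"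
  have P: "ideal P D" and Q: "ideal Q D" using PQ unfolding primeideal_def by blast+
  have S: "ideal (P <+>\<^bsub>D\<^esub> Q) D" by (rule ring.add_ideals[OF D_ring P Q])
  have pp: "primeideal (pre P k) (R k)" "primeideal (pre Q k) (R k)" for k
    using PQ pre_prime by blast+
  show "P <+>\<^bsub>D\<^esub> Q = carrier D \<or> primeideal (P <+>\<^bsub>D\<^esub> Q) D"
  proof (cases "\<exists>k. pre P k <+>\<^bsub>R k\<^esub> pre Q k = carrier (R k)")
    case True
    then obtain k where k: "pre P k <+>\<^bsub>R k\<^esub> pre Q k = carrier (R k)" by blast
    have o: "\<one>\<^bsub>R k\<^esub> \<in> carrier (R k)" by (rule ring.ring_simprules(6)[OF rg])
    have "cl k \<one>\<^bsub>R k\<^esub> \<in> P <+>\<^bsub>D\<^esub> Q"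
      using sum_char[OF P Q o] k pid[OF o] o by auto
    then have "\<one>\<^bsub>D\<^esub> \<in> P <+>\<^bsub>D\<^esub> Q" by (simp add: one_cl[of k])
    then show ?thesis using ideal.one_imp_carrier[OF S] by blast
  next
    case False
    then have T: "primeideal (pre P k <+>\<^bsub>R k\<^esub> pre Q k) (R k)" for k
    proof -
      have "irreducible_intersection_property (R k)" using iip by blast
      then have "pre P k <+>\<^bsub>R k\<^esub> pre Q k = carrier (R k) \<or> primeideal (pre P k <+>\<^bsub>R k\<^esub> pre Q k) (R k)"
        using pp unfolding irreducible_intersection_property_def by blast
      then show ?thesis using False by blast
    qed
    have "primeideal (P <+>\<^bsub>D\<^esub> Q) D"
    proof (rule primeidealI[OF S D_cring])
      show "carrier D \<noteq> P <+>\<^bsub>D\<^esub> Q"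
      proof
        assume "carrier D = P <+>\<^bsub>D\<^esub> Q"
        moreover have o: "\<one>\<^bsub>R undefined\<^esub> \<in> carrier (R undefined)" by (rule ring.ring_simprules(6)[OF rg])
        ultimately have "cl undefined \<one>\<^bsub>R undefined\<^esub> \<in> P <+>\<^bsub>D\<^esub> Q" using cl_in by blast
        then obtain m where "undefined \<le> m" "phi undefined m \<one>\<^bsub>R undefined\<^esub> \<in> pre P m <+>\<^bsub>R m\<^esub> pre Q m"
          using sum_char[OF P Q o] by blast
        then have "\<one>\<^bsub>R m\<^esub> \<in> pre P m <+>\<^bsub>R m\<^esub> pre Q m" using pone by simp
        then have "pre P m <+>\<^bsub>R m\<^esub> pre Q m = carrier (R m)"
          using ideal.one_imp_carrier[OF T[unfolded primeideal_def, THEN conjunct1]] by blast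
        then show False using primeideal.I_notcarr[OF T] by metis
      qed
    next
      fix a b assume ab: "a \<in> carrier D" "b \<in> carrier D" "a \<otimes>\<^bsub>D\<^esub> b \<in> P <+>\<^bsub>D\<^esub> Q"
      from ab(1,2) obtain k x y where xy: "x \<in> carrier (R k)" "y \<in> carrier (R k)" "a = cl k x" "b = cl k y"
        by (rule carrierE2)
      have xyc: "x \<otimes>\<^bsub>R k\<^esub> y \<in> carrier (R k)" using xy ring.ring_simprules(5)[OF rg] by blast
      have "cl k (x \<otimes>\<^bsub>R k\<^esub> y) \<in> P <+>\<^bsub>D\<^esub> Q" using ab xy by (simp add: mult_cl)
      then obtain m where m: "k \<le> m" "phi k m (x \<otimes>\<^bsub>R k\<^esub> y) \<in> pre P m <+>\<^bsub>R m\<^esub> pre Q m"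
        using sum_char[OF P Q xyc] by blast
      then have "phi k m x \<otimes>\<^bsub>R m\<^esub> phi k m y \<in> pre P m <+>\<^bsub>R m\<^esub> pre Q m"
        using pmult xy by simp
      then have "phi k m x \<in> pre P m <+>\<^bsub>R m\<^esub> pre Q m \<or> phi k m y \<in> pre P m <+>\<^bsub>R m\<^esub> pre Q m"
        using primeideal.I_prime[OF T] pcl[OF m(1)] xy by blast
      moreover have "cl k x = cl m (phi k m x)" "cl k y = cl m (phi k m y)"
        using cl_lift[OF m(1)] xy by auto
      moreover have "phi m m (phi k m x) = phi k m x" "phi m m (phi k m y) = phi k m y"
        using pid pcl[OF m(1)] xy by auto
      ultimately show "a \<in> P <+>\<^bsub>D\<^esub> Q \<or> b \<in> P <+>\<^bsub>D\<^esub> Q"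
      proof (elim disjE conjE)
        assume h: "phi k m x \<in> pre P m <+>\<^bsub>R m\<^esub> pre Q m" and e: "cl k x = cl m (phi k m x)"
          and e2: "phi m m (phi k m x) = phi k m x"
        have "cl m (phi k m x) \<in> P <+>\<^bsub>D\<^esub> Q"
          using sum_char[OF P Q pcl[OF m(1) xy(1)]] h e2 order_refl by metis
        then show ?thesis using e xy(3) by simp
      next
        assume h: "phi k m y \<in> pre P m <+>\<^bsub>R m\<^esub> pre Q m" and e: "cl k y = cl m (phi k m y)"
          and e2: "phi m m (phi k m y) = phi k m y"
        have "cl m (phi k m y) \<in> P <+>\<^bsub>D\<^esub> Q"
          using sum_char[OF P Q pcl[OF m(1) xy(2)]] h e2 order_refl by metis
        then show ?thesis using e xy(4) by simp
      qed
    qed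
    then show ?thesis by blast
  qed
qed

end

theorem mainTheorem12:
  fixes R :: "'i::order \<Rightarrow> 'a ring" and phi :: "'i \<Rightarrow> 'i \<Rightarrow> 'a \<Rightarrow> 'a"
  assumes directed: "\<forall>i j::'i. \<exists>k. i \<le> k \<and> j \<le> k"
    and system: "directed_system R phi"
    and iip: "\<forall>i. irreducible_intersection_property (R i)"
  shows "cring (direct_limit R phi) \<and> irreducible_intersection_property (direct_limit R phi)"
proof -
  interpret dsys R phi using directed system by (rule dsys.intro)
  show ?thesis using D_cring iip_D[OF iip] by blast
qed

end
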